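(* Let $D_n=A_n$, $E_n=-B_n$, $F_n=C_n$. There is a constant $C>0$, independent of $n$, such that for every $n\in\mathbb N$ and every $t\in[0,T]$: $$\max\Big\{|D_n(t)|^2,|D_n'(t)|^2,\Big|\tfrac{D_n''(t)}{\lambda_n^{1/2}}\Big|^2,\Big|\tfrac{D_n''(t)}{\lambda_n^{3/2}}\Big|^2\Big\}\le C,\qquad \max\Big\{|E_n(t)|^2,|E_n'(t)|^2,\Big|\tfrac{E_n''(t)}{\lambda_n^{1/2}}\Big|^2,\Big|\tfrac{E_n''(t)}{\lambda_n^{3/2}}\Big|^2\Big\}\le C,$$ $$\max\Big\{|\lambda_n^{1/2}F_n(t)|^2,|\lambda_nF_n(t)|^2,|\lambda_n^{1/2}F_n'(t)|^2,|F_n''(t)|^2,\Big|\tfrac{F_n''(t)}{\lambda_n^{1/2}}\Big|^2\Big\}\le C.$$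
   Context: Setting: $0<s<1$, $\Omega\subset\mathbb R^N$ bounded open with Lipschitz boundary, $T>0$, real $\alpha,b,c$ with $b>0$ and $\gamma:=\alpha-c^2/b>0$. $0<\lambda_1\le\lambda_2\le\dots\to\infty$ are the eigenvalues of the Dirichlet fractional Laplacian $(-\Delta)_D^s$ on $\Omega$ (realization of $(-\Delta)^s$ in $L^2(\Omega)$ with zero exterior condition). For each $n$, $\lambda_{n,1},\lambda_{n,2},\lambda_{n,3}$ are the roots of $z^3+\alpha z^2+b\lambda_nz+c^2\lambda_n=0$; $\lambda_{n,1}$ is real and $\lambda_{n,3}=\overline{\lambda_{n,2}}$ is non-real, all with negative real parts, and as $n\to\infty$: $\lambda_{n,1}\to-c^2/b$, $\mathrm{Re}\,\lambda_{n,2}\to-\gamma/2$, $|\mathrm{Im}\,\lambda_{n,2}|\sim\sqrt{b\lambda_n}$. $\xi_{n,1}=(\lambda_{n,1}-\lambda_{n,2})(\lambda_{n,1}-\lambda_{n,3})$, $\xi_{n,2}=(\lambda_{n,1}-\lambda_{n,2})(\lambda_{n,2}-\lambda_{n,3})$, $\xi_{n,3}=(\lambda_{n,1}-\lambda_{n,3})(\lambda_{n,2}-\lambda_{n,3})$; $A_n(t)=\frac{\lambda_{n,2}\lambda_{n,3}}{\xi_{n,1}}e^{\lambda_{n,1}t}-\frac{\lambda_{n,1}\lambda_{n,3}}{\xi_{n,2}}e^{\lambda_{n,2}t}+\frac{\lambda_{n,1}\lambda_{n,2}}{\xi_{n,3}}e^{\lambda_{n,3}t}$, $B_n(t)=-\frac{\lambda_{n,2}+\lambda_{n,3}}{\xi_{n,1}}e^{\lambda_{n,1}t}+\frac{\lambda_{n,1}+\lambda_{n,3}}{\xi_{n,2}}e^{\lambda_{n,2}t}-\frac{\lambda_{n,1}+\lambda_{n,2}}{\xi_{n,3}}e^{\lambda_{n,3}t}$,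 $C_n(t)=\frac{1}{\xi_{n,1}}e^{\lambda_{n,1}t}-\frac{1}{\xi_{n,2}}e^{\lambda_{n,2}t}+\frac{1}{\xi_{n,3}}e^{\lambda_{n,3}t}$. *)

theory Defs
  imports "HOL-Analysis.Analysis"
begin

text \<open>The functions A_n, B_n, C_n built from the three roots l1, l2, l3
  (lambda_{n,1}, lambda_{n,2}, lambda_{n,3}) of the characteristic cubic.\<close>

definition xi1 :: "complex \<Rightarrow> complex \<Rightarrow> complex \<Rightarrow> complex" where
  "xi1 a1 a2 a3 = (a1 - a2) * (a1 - a3)"
definition xi2 :: "complex \<Rightarrow> complex \<Rightarrow> complex \<Rightarrow> complex" where
  "xi2 a1 a2 a3 = (a1 - a2) * (a2 - a3)"
definition xi3 :: "complex \<Rightarrow> complex \<Rightarrow> complex \<Rightarrow> complex" where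
  "xi3 a1 a2 a3 = (a1 - a3) * (a2 - a3)"

definition Afun :: "complex \<Rightarrow> complex \<Rightarrow> complex \<Rightarrow> real \<Rightarrow> complex" where
  "Afun a1 a2 a3 t =
     a2 * a3 / xi1 a1 a2 a3 * exp (a1 * of_real t)
   - a1 * a3 / xi2 a1 a2 a3 * exp (a2 * of_real t)
   + a1 * a2 / xi3 a1 a2 a3 * exp (a3 * of_real t)"

definition Bfun :: "complex \<Rightarrow> complex \<Rightarrow> complex \<Rightarrow> real \<Rightarrow> complex" where
  "Bfun a1 a2 a3 t =
   - (a2 + a3) / xi1 a1 a2 a3 * exp (a1 * of_real t)
   + (a1 + a3) / xi2 a1 a2 a3 * exp (a2 * of_real t)
   - (a1 + a2) / xi3 a1 a2 a3 * exp (a3 * of_real t)"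

definition Cfun :: "complex \<Rightarrow> complex \<Rightarrow> complex \<Rightarrow> real \<Rightarrow> complex" where
  "Cfun a1 a2 a3 t =
     1 / xi1 a1 a2 a3 * exp (a1 * of_real t)
   - 1 / xi2 a1 a2 a3 * exp (a2 * of_real t)
   + 1 / xi3 a1 a2 a3 * exp (a3 * of_real t)"

definition d1 :: "(real \<Rightarrow> complex) \<Rightarrow> real \<Rightarrow> complex" where
  "d1 f t = vector_derivative f (at t)"
definition d2 :: "(real \<Rightarrow> complex) \<Rightarrow> real \<Rightarrow> complex" where
  "d2 f t = vector_derivative (\<lambda>s. vector_derivative f (at s)) (at t)"

end

theory Submission imports Defs begin

definition es :: "complex \<Rightarrow> complex \<Rightarrow> complex \<Rightarrow> complex \<Rightarrow> complex \<Rightarrow> complex \<Rightarrow> real \<Rightarrow> complex" where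
 "es c1 c2 c3 a1 a2 a3 t = c1 * exp(a1 * of_real t) + c2 * exp(a2 * of_real t) + c3 * exp(a3 * of_real t)"

lemma exp_hvd: "((\<lambda>x. exp (a * complex_of_real x)) has_vector_derivative a * exp (a * of_real t)) (at t)"
proof -
  have "((\<lambda>z. exp (a * z)) has_field_derivative exp (a * of_real t) * a) (at (of_real t))"
    by (auto intro!: derivative_eq_intros)
  from has_vector_derivative_real_field[OF this] show ?thesis by (simp add: mult.commute)
qed

lemma es_hvd: "(es c1 c2 c3 a1 a2 a3 has_vector_derivative es (c1 * a1) (c2 * a2) (c3 * a3) a1 a2 a3 t) (at t)"
  unfolding es_def
  by (rule derivative_eq_intros exp_hvd refl | simp add: algebra_simps)+

lemma es_d1: "d1 (es c1 c2 c3 a1 a2 a3) = es (c1 * a1) (c2 * a2) (c3 * a3) a1 a2 a3"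
  unfolding d1_def by (rule ext, rule vector_derivative_at, rule es_hvd)

lemma es_d2: "d2 (es c1 c2 c3 a1 a2 a3) = es (c1 * a1 * a1) (c2 * a2 * a2) (c3 * a3 * a3) a1 a2 a3"
  using es_d1[of c1 c2 c3 a1 a2 a3] es_d1[of "c1 * a1" "c2 * a2" "c3 * a3" a1 a2 a3]
  unfolding d1_def d2_def by (auto simp: fun_eq_iff)

lemma es_bound:
  assumes "t \<ge> 0" "Re a1 \<le> 0" "Re a2 \<le> 0" "Re a3 \<le> 0"
  shows "cmod (es c1 c2 c3 a1 a2 a3 t) \<le> cmod c1 + cmod c2 + cmod c3"
proof -
  have e: "cmod (exp (a * of_real t)) \<le> 1" if "Re a \<le> 0" for a
    using that assms(1) by (simp add: mult_nonpos_nonneg)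
  have "cmod (es c1 c2 c3 a1 a2 a3 t) \<le> cmod c1 * cmod (exp(a1 * of_real t)) + cmod c2 * cmod (exp(a2 * of_real t)) + cmod c3 * cmod (exp(a3 * of_real t))"
    unfolding es_def by (metis norm_mult norm_triangle_le add_mono order_refl)
  also have "\<dots> \<le> cmod c1 * 1 + cmod c2 * 1 + cmod c3 * 1"
    by (intro add_mono mult_left_mono e assms) auto
  finally show ?thesis by simp
qed

lemma es_bounds:
  assumes "t \<ge> 0" "Re a1 \<le> 0" "Re a2 \<le> 0" "Re a3 \<le> 0"
  shows "cmod (es c1 c2 c3 a1 a2 a3 t) \<le> cmod c1 + cmod c2 + cmod c3"
    and "cmod (d1 (es c1 c2 c3 a1 a2 a3) t) \<le> cmod c1 * cmod a1 + cmod c2 * cmod a2 + cmod c3 * cmod a3"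
    and "cmod (d2 (es c1 c2 c3 a1 a2 a3) t) \<le> cmod c1 * cmod a1^2 + cmod c2 * cmod a2^2 + cmod c3 * cmod a3^2"
  using es_bound[OF assms, of c1 c2 c3] es_bound[OF assms, of "c1 * a1" "c2 * a2" "c3 * a3"]
    es_bound[OF assms, of "c1 * a1 * a1" "c2 * a2 * a2" "c3 * a3 * a3"]
  by (simp_all add: es_d1 es_d2 norm_mult power2_eq_square mult.assoc)

lemma Afun_es: "Afun a1 a2 a3 = es (a2 * a3 / xi1 a1 a2 a3) (-(a1 * a3 / xi2 a1 a2 a3)) (a1 * a2 / xi3 a1 a2 a3) a1 a2 a3"
  by (rule ext) (simp add: Afun_def es_def)
lemma Bfun_es: "(\<lambda>t. - Bfun a1 a2 a3 t) = es ((a2 + a3) / xi1 a1 a2 a3) (-((a1 + a3) / xi2 a1 a2 a3)) ((a1 + a2) / xi3 a1 a2 a3) a1 a2 a3"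
  proof (rule ext)
  fix t
  have r: "-((- u1) * e1 + u2 * e2 - u3 * e3) = u1 * e1 + (-u2) * e2 + u3 * e3" for u1 u2 u3 e1 e2 e3 :: complex
    by algebra
  show "- Bfun a1 a2 a3 t = es ((a2 + a3) / xi1 a1 a2 a3) (-((a1 + a3) / xi2 a1 a2 a3)) ((a1 + a2) / xi3 a1 a2 a3) a1 a2 a3 t"
    unfolding Bfun_def es_def minus_divide_left[symmetric] by (rule r)
qed
lemma Cfun_es: "Cfun a1 a2 a3 = es (1 / xi1 a1 a2 a3) (-(1 / xi2 a1 a2 a3)) (1 / xi3 a1 a2 a3) a1 a2 a3"
  by (rule ext) (simp add: Cfun_def es_def)

lemma div_u: fixes N a c s u Bb :: real
  assumes "N \<le> a + c * s" "0 \<le> a" "0 \<le> c" "1 \<le> u" "s \<le> Bb * u"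
  shows "N/u \<le> a + c * Bb"
proof -
  have "N/u \<le> (a + c * s)/u" using assms by (simp add: divide_right_mono)
  also have "\<dots> = a/u + c * (s/u)" by (simp add: add_divide_distrib)
  also have "a/u \<le> a" using assms by (simp add: divide_le_eq mult_le_cancel_left1 mult_nonneg_nonneg)
  hence "a/u + c * (s/u) \<le> a + c * Bb" using assms by (intro add_mono mult_left_mono) (auto simp: divide_le_eq mult.commute)
  finally show ?thesis .
qed

lemma div_u3: fixes N u :: real assumes "0 \<le> N" "1 \<le> u" shows "N/(u^2 * u) \<le> N/u"
proof -
  have "u \<le> u^2 * u" using mult_right_mono[of 1 "u^2" u] assms by (simp add: one_le_power)
  thus ?thesis using assms by (intro divide_left_mono) auto
qed

lemma regime:
  fixes A s X1 X2 X3 P P2 P3 u al Bb be :: real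
  assumes A: "0 \<le> A" "A \<le> al" and s: "1 \<le> s" and X1: "s^2/2 \<le> X1" and X2: "s^2 \<le> X2" and X3: "s^2 \<le> X3"
    and P: "0 \<le> P" "P \<le> al" and P2: "0 \<le> P2" "P2 \<le> al + s" and P3: "0 \<le> P3" "P3 \<le> al + s"
    and u: "1 \<le> u" and su: "s \<le> Bb * u" and us: "u \<le> be * s" and Bb: "Bb \<ge> 0" and be: "be \<ge> 0"
  shows "(s * s/X1 + A * s/X2 + A * s/X3) \<le> 2 + 2 * al"
    and "(s * s/X1 * A + A * s/X2 * s + A * s/X3 * s) \<le> 4 * al"
    and "(s * s/X1 * A^2 + A * s/X2 * s^2 + A * s/X3 * s^2)/u \<le> 2 * al^2 + 2 * al * Bb"
    and "(s * s/X1 * A^2 + A * s/X2 * s^2 + A * s/X3 * s^2)/(u^2 * u) \<le> 2 * al^2 + 2 * al * Bb"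
    and "(P/X1 + P2/X2 + P3/X3) \<le> 2 * al + 2 * (al+1)"
    and "(P/X1 * A + P2/X2 * s + P3/X3 * s) \<le> 2 * al^2 + 2 * (al+1)"
    and "(P/X1 * A^2 + P2/X2 * s^2 + P3/X3 * s^2)/u \<le> 2 * al^3 + 2 * (al+Bb)"
    and "(P/X1 * A^2 + P2/X2 * s^2 + P3/X3 * s^2)/(u^2 * u) \<le> 2 * al^3 + 2 * (al+Bb)"
    and "u * (1/X1+1/X2+1/X3) \<le> 4 * be^2"
    and "u^2 * (1/X1+1/X2+1/X3) \<le> 4 * be^2"
    and "u * (1/X1 * A+1/X2 * s+1/X3 * s) \<le> be * (2 * al+2)"
    and "(1/X1 * A^2+1/X2 * s^2+1/X3 * s^2) \<le> 2 * al^2+2"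
    and "(1/X1 * A^2+1/X2 * s^2+1/X3 * s^2)/u \<le> 2 * al^2+2"
proof -
  have al: "0 \<le> al" using A by linarith
  have s0: "0 < s" using s by linarith
  have s2: "1 \<le> s^2" using s by (simp add: one_le_power)
  have X1p: "0 < X1" using X1 s0 by (smt (verit) zero_less_power divide_pos_pos)
  have X2p: "0 < X2" using X2 s0 by (smt (verit) zero_less_power)
  have X3p: "0 < X3" using X3 s0 by (smt (verit) zero_less_power)
  define y1 where "y1 = 1/X1"
  define y2 where "y2 = 1/X2"
  define y3 where "y3 = 1/X3"
  have y1: "0 < y1" "s^2 * y1 \<le> 2" using X1 X1p s0 by (auto simp: y1_def field_simps)
  have y2: "0 < y2" "s^2 * y2 \<le> 1" using X2 X2p s0 by (auto simp: y2_def field_simps)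
  have y3: "0 < y3" "s^2 * y3 \<le> 1" using X3 X3p s0 by (auto simp: y3_def field_simps)
  have sy: "s * y \<le> s^2 * y" "y \<le> s^2 * y" if "0 < y" for y
    using that s s2 by (auto simp: power2_eq_square mult_le_cancel_right1)
  have sy1: "s * y1 \<le> 2" "y1 \<le> 2" using sy[OF y1(1)] y1 by linarith+
  have sy2: "s * y2 \<le> 1" "y2 \<le> 1" using sy[OF y2(1)] y2 by linarith+
  have sy3: "s * y3 \<le> 1" "y3 \<le> 1" using sy[OF y3(1)] y3 by linarith+
  have fr: "a/X = a * (1/X)" for a X :: real by simp
  have m: "x * y \<le> a * b" if "0 \<le> x" "x \<le> a" "0 \<le> y" "y \<le> b" for x y a b :: real
    using that by (meson mult_mono order_trans)
  have A2: "A^2 \<le> al^2" "0 \<le> A^2" using A by (auto intro: power_mono)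
  show g1: "(s * s/X1 + A * s/X2 + A * s/X3) \<le> 2 + 2 * al"
  proof -
    have "A * s/X2 = A * (s * y2)" "A * s/X3 = A * (s * y3)" "s * s/X1 = s^2 * y1"
      by (simp_all add: y2_def y3_def y1_def power2_eq_square)
    moreover have "A * (s * y2) \<le> al * 1" "A * (s * y3) \<le> al * 1" using A sy2 sy3 y2 y3 s0
      by (intro m; simp)+
    ultimately show ?thesis using y1 by linarith
  qed

  show g2: "(s * s/X1 * A + A * s/X2 * s + A * s/X3 * s) \<le> 4 * al"
  proof -
    have e: "s * s/X1 * A = (s^2 * y1) * A" "A * s/X2 * s = A * (s^2 * y2)" "A * s/X3 * s = A * (s^2 * y3)"
      by (simp_all add: y2_def y3_def y1_def power2_eq_square)
    have "(s^2 * y1) * A \<le> 2 * al" "A * (s^2 * y2) \<le> al * 1" "A * (s^2 * y3) \<le> al * 1" using A y1 y2 y3 s0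
      by (intro m; simp)+
    thus ?thesis unfolding e by linarith
  qed
  have N3: "(s * s/X1 * A^2 + A * s/X2 * s^2 + A * s/X3 * s^2) \<le> 2 * al^2 + (2 * al) * s"
  proof -
    have e: "s * s/X1 * A^2 = (s^2 * y1) * A^2" "A * s/X2 * s^2 = (A * s) * (s^2 * y2)" "A * s/X3 * s^2 = (A * s) * (s^2 * y3)"
      by (simp_all add: y2_def y3_def y1_def power2_eq_square)
    have "(s^2 * y1) * A^2 \<le> 2 * al^2" "(A * s) * (s^2 * y2) \<le> (al * s) * 1" "(A * s) * (s^2 * y3) \<le> (al * s) * 1" using A A2 y1 y2 y3 s0
      by (intro m; simp)+
    thus ?thesis unfolding e by linarith
  qed
  have N3p: "0 \<le> (s * s/X1 * A^2 + A * s/X2 * s^2 + A * s/X3 * s^2)" using A X1p X2p X3p s0 by simp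
  show g3: "(s * s/X1 * A^2 + A * s/X2 * s^2 + A * s/X3 * s^2)/u \<le> 2 * al^2 + 2 * al * Bb"
    using div_u[OF N3 _ _ u su] al by simp
  show "(s * s/X1 * A^2 + A * s/X2 * s^2 + A * s/X3 * s^2)/(u^2 * u) \<le> 2 * al^2 + 2 * al * Bb"
    using div_u3[OF N3p u] g3 by linarith
  show "(P/X1 + P2/X2 + P3/X3) \<le> 2 * al + 2 * (al+1)"
  proof -
    have e: "P/X1 = P * y1" "P2/X2 = P2 * y2" "P3/X3 = P3 * y3" by (simp_all add: y2_def y3_def y1_def)
    have "P * y1 \<le> al * 2" "P2 * y2 \<le> (al+s) * y2" "P3 * y3 \<le> (al+s) * y3" using P P2 P3 y1 sy1 y2 y3
      by (intro m; simp)+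
    moreover have "(al+s) * y2 \<le> al + 1" "(al+s) * y3 \<le> al + 1"
      using sy2 sy3 y2 y3 al mult_left_mono[of y2 1 al] mult_left_mono[of y3 1 al] by (simp_all add: distrib_right)
    ultimately have "P * y1 \<le> al * 2" "P2 * y2 \<le> al + 1" "P3 * y3 \<le> al + 1" by (meson order_trans)+
    hence "P * y1 + P2 * y2 + P3 * y3 \<le> al * 2 + (al + 1) + (al + 1)" by (intro add_mono)
    thus ?thesis unfolding e by simp
  qed
  show "(P/X1 * A + P2/X2 * s + P3/X3 * s) \<le> 2 * al^2 + 2 * (al+1)"
  proof -
    have e: "P/X1 * A = (P * A) * y1" "P2/X2 * s = P2 * (s * y2)" "P3/X3 * s = P3 * (s * y3)" by (simp_all add: y2_def y3_def y1_def)
    have "(P * A) * y1 \<le> (al * al) * 2" using P A y1 sy1 by (intro m m; simp)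
    moreover have "P2 * (s * y2) \<le> (al+s) * (s * y2)" "P3 * (s * y3) \<le> (al+s) * (s * y3)" using P2 P3 y2 y3 s0
      by (intro m; simp)+
    moreover have "(al+s) * (s * y2) \<le> al + 1" "(al+s) * (s * y3) \<le> al + 1"
      using sy2 sy3 y2 y3 al s0 mult_left_mono[of "s*y2" 1 al] mult_left_mono[of "s*y3" 1 al]
      by (simp_all add: distrib_right power2_eq_square mult.assoc)
    ultimately have "(P * A) * y1 \<le> (al * al) * 2" "P2 * (s * y2) \<le> al + 1" "P3 * (s * y3) \<le> al + 1" by (meson order_trans)+
    thus ?thesis unfolding e by (simp add: power2_eq_square)
  qed
  have N7: "(P/X1 * A^2 + P2/X2 * s^2 + P3/X3 * s^2) \<le> (2 * al^3 + 2 * al) + 2 * s"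
  proof -
    have e: "P/X1 * A^2 = (P * A^2) * y1" "P2/X2 * s^2 = P2 * (s^2 * y2)" "P3/X3 * s^2 = P3 * (s^2 * y3)" by (simp_all add: y2_def y3_def y1_def)
    have "(P * A^2) * y1 \<le> (al * al^2) * 2" using P A2 y1 sy1 by (intro m m; simp)
    moreover have "P2 * (s^2 * y2) \<le> (al+s) * 1" "P3 * (s^2 * y3) \<le> (al+s) * 1" using P2 P3 y2 y3 s0
      by (intro m; simp)+
    ultimately show ?thesis unfolding e by (simp add: power3_eq_cube power2_eq_square)
  qed
  have N7p: "0 \<le> (P/X1 * A^2 + P2/X2 * s^2 + P3/X3 * s^2)" using P P2 P3 X1p X2p X3p by simp
  show g7: "(P/X1 * A^2 + P2/X2 * s^2 + P3/X3 * s^2)/u \<le> 2 * al^3 + 2 * (al+Bb)"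
    using div_u[OF N7 _ _ u su] al by simp
  show "(P/X1 * A^2 + P2/X2 * s^2 + P3/X3 * s^2)/(u^2 * u) \<le> 2 * al^3 + 2 * (al+Bb)"
    using div_u3[OF N7p u] g7 by linarith
  have Sy: "s^2 * (y1+y2+y3) \<le> 4" "0 \<le> y1+y2+y3" using y1 y2 y3 by (simp_all add: distrib_left)
  have uu: "u^2 \<le> (be * s)^2" using u us by (intro power_mono) auto
  have uu2: "u \<le> u^2" using u by (simp add: power2_eq_square)
  show g10: "u^2 * (1/X1+1/X2+1/X3) \<le> 4 * be^2"
  proof -
    have "u^2 * (y1+y2+y3) \<le> (be * s)^2 * (y1+y2+y3)" using uu Sy by (intro mult_right_mono)
    also have "\<dots> = be^2 * (s^2 * (y1+y2+y3))" by (simp add: power_mult_distrib)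
    also have "\<dots> \<le> be^2 * 4" using Sy by (intro mult_left_mono) auto
    finally show ?thesis by (simp add: y1_def y2_def y3_def mult.commute)
  qed
  show "u * (1/X1+1/X2+1/X3) \<le> 4 * be^2"
  proof -
    have "u * (y1+y2+y3) \<le> u^2 * (y1+y2+y3)" using uu2 Sy by (intro mult_right_mono)
    thus ?thesis using g10 by (simp add: y1_def y2_def y3_def)
  qed
  show "u * (1/X1 * A+1/X2 * s+1/X3 * s) \<le> be * (2 * al+2)"
  proof -
    have q0: "0 \<le> y1 * A+y2 * s+y3 * s" using y1 y2 y3 A s0 by simp
    have "u * (y1 * A+y2 * s+y3 * s) \<le> (be * s) * (y1 * A+y2 * s+y3 * s)" using us q0 by (intro mult_right_mono)
    also have "\<dots> = be * (A * (s * y1) + s^2 * y2 + s^2 * y3)" by (simp add: algebra_simps power2_eq_square)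
    also have "A * (s * y1) \<le> al * 2" using A sy1 y1 s0 by (intro m) auto
    hence "be * (A * (s * y1) + s^2 * y2 + s^2 * y3) \<le> be * (2 * al+2)" using y2 y3 be by (intro mult_left_mono) auto
    finally show ?thesis by (simp add: y1_def y2_def y3_def)
  qed
  have N12: "(1/X1 * A^2+1/X2 * s^2+1/X3 * s^2) \<le> (2 * al^2+2) + 0 * s"
  proof -
    have "y1 * A^2 \<le> 2 * al^2" using sy1 y1 A2 by (intro m) auto
    moreover have "y2 * s^2 \<le> 1" "y3 * s^2 \<le> 1" using y2 y3 by (simp_all add: mult.commute)
    ultimately have "y1 * A^2 + y2 * s^2 + y3 * s^2 \<le> 2 * al^2 + 1 + 1" by (intro add_mono)
    thus ?thesis by (simp add: y1_def y2_def y3_def)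
  qed
  thus "(1/X1 * A^2+1/X2 * s^2+1/X3 * s^2) \<le> 2 * al^2+2" by simp
  show "(1/X1 * A^2+1/X2 * s^2+1/X3 * s^2)/u \<le> 2 * al^2+2"
    using div_u[OF N12 _ _ u su] al by simp
qed

definition Bs :: "real \<Rightarrow> real \<Rightarrow> real \<Rightarrow> real \<Rightarrow> real \<Rightarrow> real \<Rightarrow> real \<Rightarrow> real \<Rightarrow> real \<Rightarrow> real" where
  "Bs A s X1 X2 X3 P P2 P3 u =
     (s * s/X1 + A * s/X2 + A * s/X3)
   + (s * s/X1 * A + A * s/X2 * s + A * s/X3 * s)
   + (s * s/X1 * A^2 + A * s/X2 * s^2 + A * s/X3 * s^2)/u
   + (s * s/X1 * A^2 + A * s/X2 * s^2 + A * s/X3 * s^2)/(u^2 * u)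
   + (P/X1 + P2/X2 + P3/X3)
   + (P/X1 * A + P2/X2 * s + P3/X3 * s)
   + (P/X1 * A^2 + P2/X2 * s^2 + P3/X3 * s^2)/u
   + (P/X1 * A^2 + P2/X2 * s^2 + P3/X3 * s^2)/(u^2 * u)
   + u * (1/X1+1/X2+1/X3)
   + u^2 * (1/X1+1/X2+1/X3)
   + u * (1/X1 * A+1/X2 * s+1/X3 * s)
   + (1/X1 * A^2+1/X2 * s^2+1/X3 * s^2)
   + (1/X1 * A^2+1/X2 * s^2+1/X3 * s^2)/u"

lemma pw:
  fixes l1 l2 l3 :: complex and la t :: real and Dn En Fn :: "real \<Rightarrow> complex"
  assumes la: "la > 0" and t: "t \<ge> 0" and re: "Re l1 \<le> 0" "Re l2 \<le> 0" "Re l3 \<le> 0"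
    and l3: "cmod l3 = cmod l2"
    and D: "Dn = Afun l1 l2 l3" and E: "En = (\<lambda>t. - Bfun l1 l2 l3 t)" and F: "Fn = Cfun l1 l2 l3"
  defines "B \<equiv> Bs (cmod l1) (cmod l2) (cmod (xi1 l1 l2 l3)) (cmod (xi2 l1 l2 l3)) (cmod (xi3 l1 l2 l3))
                   (cmod (l2 + l3)) (cmod (l1 + l3)) (cmod (l1 + l2)) (sqrt la)"
  shows "cmod (Dn t) \<le> B" "cmod (d1 Dn t) \<le> B"
    "cmod (d2 Dn t / of_real (la powr (1/2))) \<le> B" "cmod (d2 Dn t / of_real (la powr (3/2))) \<le> B"
    "cmod (En t) \<le> B" "cmod (d1 En t) \<le> B"
    "cmod (d2 En t / of_real (la powr (1/2))) \<le> B" "cmod (d2 En t / of_real (la powr (3/2))) \<le> B"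
    "cmod (of_real (la powr (1/2)) * Fn t) \<le> B" "cmod (of_real la * Fn t) \<le> B"
    "cmod (of_real (la powr (1/2)) * d1 Fn t) \<le> B" "cmod (d2 Fn t) \<le> B"
    "cmod (d2 Fn t / of_real (la powr (1/2))) \<le> B"
proof -
  define A where "A = cmod l1"
  define s where "s = cmod l2"
  define X1 where "X1 = cmod (xi1 l1 l2 l3)"
  define X2 where "X2 = cmod (xi2 l1 l2 l3)"
  define X3 where "X3 = cmod (xi3 l1 l2 l3)"
  define P where "P = cmod (l2 + l3)"
  define P2 where "P2 = cmod (l1 + l3)"
  define P3 where "P3 = cmod (l1 + l2)"
  define u where "u = sqrt la"
  have B: "B = Bs A s X1 X2 X3 P P2 P3 u" by (simp add: B_def A_def s_def X1_def X2_def X3_def P_def P2_def P3_def u_def)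
  have nn: "0 \<le> A" "0 \<le> s" "0 \<le> X1" "0 \<le> X2" "0 \<le> X3" "0 \<le> P" "0 \<le> P2" "0 \<le> P3" "0 < u"
    by (simp_all add: A_def s_def X1_def X2_def X3_def P_def P2_def P3_def u_def la)
  have p1: "la powr (1/2) = u" using la by (simp add: u_def powr_half_sqrt)
  have p3: "la powr (3/2) = u^2 * u"
  proof -
    have "la powr (3/2) = la powr (1 + 1/2)" by simp
    also have "\<dots> = la * la powr (1/2)" using la by (subst powr_add) simp
    finally show ?thesis using la p1 by (simp add: u_def)
  qed
  have la2: "la = u^2" using la by (simp add: u_def)
  note bD = es_bounds[OF t re, of "l2 * l3 / xi1 l1 l2 l3" "-(l1 * l3 / xi2 l1 l2 l3)" "l1 * l2 / xi3 l1 l2 l3", folded Afun_es D]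
  note bE = es_bounds[OF t re, of "(l2 + l3) / xi1 l1 l2 l3" "-((l1 + l3) / xi2 l1 l2 l3)" "(l1 + l2) / xi3 l1 l2 l3", folded Bfun_es]
  note bF = es_bounds[OF t re, of "1 / xi1 l1 l2 l3" "-(1 / xi2 l1 l2 l3)" "1 / xi3 l1 l2 l3", folded Cfun_es F]
  have D0: "cmod (Dn t) \<le> s * s/X1 + A * s/X2 + A * s/X3"
    using bD(1) by (simp add: norm_mult norm_divide l3 A_def s_def X1_def X2_def X3_def)
  have D1: "cmod (d1 Dn t) \<le> s * s/X1 * A + A * s/X2 * s + A * s/X3 * s"
    using bD(2) by (simp add: norm_mult norm_divide l3 A_def s_def X1_def X2_def X3_def)
  have D2: "cmod (d2 Dn t) \<le> s * s/X1 * A^2 + A * s/X2 * s^2 + A * s/X3 * s^2"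
    using bD(3) by (simp add: norm_mult norm_divide l3 A_def s_def X1_def X2_def X3_def)
  have E0: "cmod (En t) \<le> P/X1 + P2/X2 + P3/X3"
    using bE(1) by (simp add: E norm_mult norm_divide l3 P_def P2_def P3_def X1_def X2_def X3_def)
  have E1: "cmod (d1 En t) \<le> P/X1 * A + P2/X2 * s + P3/X3 * s"
    using bE(2) by (simp add: E norm_mult norm_divide l3 A_def s_def P_def P2_def P3_def X1_def X2_def X3_def)
  have E2: "cmod (d2 En t) \<le> P/X1 * A^2 + P2/X2 * s^2 + P3/X3 * s^2"
    using bE(3) by (simp add: E norm_mult norm_divide l3 A_def s_def P_def P2_def P3_def X1_def X2_def X3_def)
  have F0: "cmod (Fn t) \<le> 1/X1+1/X2+1/X3"
    using bF(1) by (simp add: norm_mult norm_divide l3 X1_def X2_def X3_def)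
  have F1: "cmod (d1 Fn t) \<le> 1/X1 * A+1/X2 * s+1/X3 * s"
    using bF(2) by (simp add: norm_mult norm_divide l3 A_def s_def X1_def X2_def X3_def)
  have F2: "cmod (d2 Fn t) \<le> 1/X1 * A^2+1/X2 * s^2+1/X3 * s^2"
    using bF(3) by (simp add: norm_mult norm_divide l3 A_def s_def X1_def X2_def X3_def)
  have dv: "cmod (z / of_real (la powr r)) = cmod z / la powr r" for z r using la by (simp add: norm_divide)
  have mv: "cmod (of_real (la powr r) * z) = la powr r * cmod z" for z r using la by (simp add: norm_mult)
  have mv2: "cmod (of_real la * z) = u^2 * cmod z" for z using la by (simp add: norm_mult u_def)
  have dm: "x/y \<le> z/y" if "x \<le> z" "0 \<le> y" for x z y :: real using that by (simp add: divide_right_mono)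
  have lm: "y * x \<le> y * z" if "x \<le> z" "0 \<le> y" for x z y :: real using that by (simp add: mult_left_mono)
  have q: "cmod (d2 Dn t / of_real (la powr (1/2))) \<le> (s * s/X1 * A^2 + A * s/X2 * s^2 + A * s/X3 * s^2)/u"
          "cmod (d2 Dn t / of_real (la powr (3/2))) \<le> (s * s/X1 * A^2 + A * s/X2 * s^2 + A * s/X3 * s^2)/(u^2 * u)"
          "cmod (d2 En t / of_real (la powr (1/2))) \<le> (P/X1 * A^2 + P2/X2 * s^2 + P3/X3 * s^2)/u"
          "cmod (d2 En t / of_real (la powr (3/2))) \<le> (P/X1 * A^2 + P2/X2 * s^2 + P3/X3 * s^2)/(u^2 * u)"
          "cmod (of_real (la powr (1/2)) * Fn t) \<le> u * (1/X1+1/X2+1/X3)"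
          "cmod (of_real la * Fn t) \<le> u^2 * (1/X1+1/X2+1/X3)"
          "cmod (of_real (la powr (1/2)) * d1 Fn t) \<le> u * (1/X1 * A+1/X2 * s+1/X3 * s)"
          "cmod (d2 Fn t / of_real (la powr (1/2))) \<le> (1/X1 * A^2+1/X2 * s^2+1/X3 * s^2)/u"
    unfolding dv mv mv2 unfolding p1 p3 using D2 E2 F0 F1 F2 nn
    by (auto intro!: dm lm)
  have pos: "0 \<le> s * s/X1 + A * s/X2 + A * s/X3" "0 \<le> s * s/X1 * A + A * s/X2 * s + A * s/X3 * s"
    "0 \<le> (s * s/X1 * A^2 + A * s/X2 * s^2 + A * s/X3 * s^2)/u"
    "0 \<le> (s * s/X1 * A^2 + A * s/X2 * s^2 + A * s/X3 * s^2)/(u^2 * u)"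
    "0 \<le> P/X1 + P2/X2 + P3/X3" "0 \<le> P/X1 * A + P2/X2 * s + P3/X3 * s"
    "0 \<le> (P/X1 * A^2 + P2/X2 * s^2 + P3/X3 * s^2)/u" "0 \<le> (P/X1 * A^2 + P2/X2 * s^2 + P3/X3 * s^2)/(u^2 * u)"
    "0 \<le> u * (1/X1+1/X2+1/X3)" "0 \<le> u^2 * (1/X1+1/X2+1/X3)" "0 \<le> u * (1/X1 * A+1/X2 * s+1/X3 * s)"
    "0 \<le> 1/X1 * A^2+1/X2 * s^2+1/X3 * s^2" "0 \<le> (1/X1 * A^2+1/X2 * s^2+1/X3 * s^2)/u"
    using nn by simp_all
  show "cmod (Dn t) \<le> B" "cmod (d1 Dn t) \<le> B"
    "cmod (d2 Dn t / of_real (la powr (1/2))) \<le> B" "cmod (d2 Dn t / of_real (la powr (3/2))) \<le> B"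
    "cmod (En t) \<le> B" "cmod (d1 En t) \<le> B"
    "cmod (d2 En t / of_real (la powr (1/2))) \<le> B" "cmod (d2 En t / of_real (la powr (3/2))) \<le> B"
    "cmod (of_real (la powr (1/2)) * Fn t) \<le> B" "cmod (of_real la * Fn t) \<le> B"
    "cmod (of_real (la powr (1/2)) * d1 Fn t) \<le> B" "cmod (d2 Fn t) \<le> B"
    "cmod (d2 Fn t / of_real (la powr (1/2))) \<le> B"
    unfolding B Bs_def using q D0 D1 E0 E1 F2 pos by linarith+
qed


definition K :: "real \<Rightarrow> real \<Rightarrow> real" where
  "K al b = (2 + 2 * al) + 4 * al + (2 * al^2 + 2 * al * (1+b)) + (2 * al^2 + 2 * al * (1+b))
     + (2 * al + 2 * (al+1)) + (2 * al^2 + 2 * (al+1)) + (2 * al^3 + 2 * (al+(1+b))) + (2 * al^3 + 2 * (al+(1+b)))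
     + 4 * (1+2/b)^2 + 4 * (1+2/b)^2 + (1+2/b) * (2 * al+2) + (2 * al^2+2) + (2 * al^2+2)"

lemma vieta:
  fixes x B Cc l1 l2 l3 :: complex
  assumes h0: "0 ^ 3 + x * 0\<^sup>2 + B * 0 + Cc = (0 - l1) * (0 - l2) * (0 - l3)"
    and h1: "1 ^ 3 + x * 1\<^sup>2 + B * 1 + Cc = (1 - l1) * (1 - l2) * (1 - l3)"
    and h2: "(-1) ^ 3 + x * (-1)\<^sup>2 + B * (-1) + Cc = (-1 - l1) * (-1 - l2) * (-1 - l3)"
  shows "x = -(l1 + l2 + l3) \<and> B = l1 * l2 + l1 * l3 + l2 * l3"
proof -
  have e0: "Cc = (0 - l1) * (0 - l2) * (0 - l3)" using h0 by simp
  have e1: "1 + x + B + Cc = (1 - l1) * (1 - l2) * (1 - l3)" using h1 by simp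
  have e2: "-1 + x - B + Cc = (-1 - l1) * (-1 - l2) * (-1 - l3)" using h2 by simp
  have "2 * x = (1 + x + B + Cc) + (-1 + x - B + Cc) - 2 * Cc" by algebra
  also have "\<dots> = (1 - l1) * (1 - l2) * (1 - l3) + (-1 - l1) * (-1 - l2) * (-1 - l3) - 2 * ((0 - l1) * (0 - l2) * (0 - l3))"
    by (subst e1, subst e2, subst e0, rule refl)
  also have "\<dots> = 2 * (-(l1 + l2 + l3))" by algebra
  finally have a: "x = -(l1 + l2 + l3)" by (metis mult_left_cancel zero_neq_numeral)
  have "2 * B = (1 + x + B + Cc) - (-1 + x - B + Cc) - 2" by algebra
  also have "\<dots> = (1 - l1) * (1 - l2) * (1 - l3) - (-1 - l1) * (-1 - l2) * (-1 - l3) - 2"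
    by (simp only: e1 e2)
  also have "\<dots> = 2 * (l1 * l2 + l1 * l3 + l2 * l3)" by algebra
  finally have b: "B = l1 * l2 + l1 * l3 + l2 * l3" by (metis mult_left_cancel zero_neq_numeral)
  from a b show ?thesis ..
qed

lemma big:
  fixes l1 l2 l3 :: complex and al b la :: real
  assumes b: "b > 0" and al: "al > 0" and l1R: "l1 \<in> \<real>" and l3: "l3 = cnj l2"
    and r0: "Re l1 < 0" and p0: "Re l2 < 0" and q0: "Im l2 \<noteq> 0"
    and V1: "of_real al = -(l1 + l2 + l3)" and V2: "of_real (b * la) = l1 * l2 + l1 * l3 + l2 * l3"
    and L1: "la \<ge> 1" and L2: "b * la \<ge> 1 + 2 * al^2"
  shows "Bs (cmod l1) (cmod l2) (cmod (xi1 l1 l2 l3)) (cmod (xi2 l1 l2 l3)) (cmod (xi3 l1 l2 l3))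
                   (cmod (l2 + l3)) (cmod (l1 + l3)) (cmod (l1 + l2)) (sqrt la) \<le> K al b"
proof -
  define r where "r = Re l1"
  define p where "p = Re l2"
  define q where "q = Im l2"
  have l1r: "l1 = of_real r" using l1R by (simp add: r_def)
  have l2pq: "l2 = Complex p q" by (simp add: p_def q_def)
  have v1: "r + 2 * p = - al" using arg_cong[OF V1, of Re] by (simp add: l3 l1r p_def)
  have v2: "2 * r * p + (p^2 + q^2) = b * la" using arg_cong[OF V2, of Re]
    by (simp add: l3 l1r p_def q_def power2_eq_square algebra_simps)
  have r0': "r < 0" and p0': "p < 0" and q0': "q \<noteq> 0" using r0 p0 q0 by (simp_all add: r_def p_def q_def)
  define m where "m = p^2 + q^2"
  have rA: "-r \<le> al" "-p \<le> al/2" using v1 r0' p0' by linarith+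
  have rp: "r * p \<le> al * (al/2)"
  proof -
    have "(-r) * (-p) \<le> al * (al/2)" using rA r0' p0' by (intro mult_mono) auto
    thus ?thesis by simp
  qed
  have rp0: "0 < r * p" using r0' p0' by (simp add: mult_neg_neg)
  have m1: "b * la - al^2 \<le> m" "m \<le> b * la" using v2 rp rp0 by (simp_all add: m_def power2_eq_square)
  have pp: "p^2 \<le> al^2/4"
  proof -
    have "(-p)^2 \<le> (al/2)^2" using rA p0' by (intro power_mono) auto
    thus ?thesis by (simp add: power_divide)
  qed
  have qq: "1 + al^2 - p^2 \<le> q^2" using m1(1) L2 unfolding m_def by linarith
  have "m \<le> 2 * q^2" using qq pp zero_le_power2[of al] unfolding m_def by linarith
  hence qm: "m/2 \<le> q^2" by simp
  have m1'': "1 \<le> m" "b * la \<le> 2 * m" using m1 L2 zero_le_power2[of al] by linarith+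
  hence m1': "1 \<le> m" "b * la / 2 \<le> m" by simp_all
  define s where "s = cmod l2"
  have s2: "s^2 = m" by (simp add: s_def m_def l2pq cmod_def)
  have s0: "0 \<le> s" by (simp add: s_def)
  have s1: "1 \<le> s" using s2 m1' s0 by (metis abs_of_nonneg one_le_power real_le_lsqrt real_sqrt_abs real_sqrt_one sqrt_le_D)
  have A: "cmod l1 = - r" using r0' by (simp add: l1r)
  have cl3: "cmod l3 = s" by (simp add: l3 s_def)
  have d12: "\<bar>q\<bar> \<le> cmod (l1 - l2)" using abs_Im_le_cmod[of "l1 - l2"] by (simp add: l1r q_def)
  have d13: "\<bar>q\<bar> \<le> cmod (l1 - l3)" using abs_Im_le_cmod[of "l1 - l3"] by (simp add: l1r q_def l3)
  have d23: "2 * \<bar>q\<bar> \<le> cmod (l2 - l3)" using abs_Im_le_cmod[of "l2 - l3"] by (simp add: q_def l3)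
  have qa: "\<bar>q\<bar> * \<bar>q\<bar> = q^2" by (simp add: power2_eq_square)
  have X1: "s^2/2 \<le> cmod (xi1 l1 l2 l3)"
  proof -
    have "\<bar>q\<bar> * \<bar>q\<bar> \<le> cmod (l1 - l2) * cmod (l1 - l3)" using d12 d13 by (intro mult_mono) auto
    thus ?thesis using qm s2 qa by (simp add: xi1_def norm_mult)
  qed
  have X2: "s^2 \<le> cmod (xi2 l1 l2 l3)"
  proof -
    have "\<bar>q\<bar> * (2 * \<bar>q\<bar>) \<le> cmod (l1 - l2) * cmod (l2 - l3)" using d12 d23 by (intro mult_mono) auto
    thus ?thesis using qm s2 qa by (simp add: xi2_def norm_mult)
  qed
  have X3: "s^2 \<le> cmod (xi3 l1 l2 l3)"
  proof -
    have "\<bar>q\<bar> * (2 * \<bar>q\<bar>) \<le> cmod (l1 - l3) * cmod (l2 - l3)" using d13 d23 by (intro mult_mono) auto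
    thus ?thesis using qm s2 qa by (simp add: xi3_def norm_mult)
  qed
  have P: "cmod (l2 + l3) = - 2 * p" using p0' by (simp add: l3 p_def complex_add_cnj)
  have P2: "cmod (l1 + l3) \<le> al + s" using norm_triangle_ineq[of l1 l3] A cl3 rA by linarith
  have P3: "cmod (l1 + l2) \<le> al + s" using norm_triangle_ineq[of l1 l2] A s_def rA by linarith
  define u where "u = sqrt la"
  have u1: "1 \<le> u" using L1 by (simp add: u_def)
  have su: "s \<le> (1+b) * u"
  proof -
    have "s = sqrt m" using s2 s0 by (metis real_sqrt_unique)
    also have "\<dots> \<le> (1+b) * u"
    proof (rule real_le_lsqrt)
      show "0 \<le> (1+b) * u" using b u1 by simp
      have h: "b * la \<le> (1+b)^2 * la" using b L1 by (intro mult_right_mono) (auto simp: power2_eq_square algebra_simps)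
      have "m \<le> (1+b)^2 * la" using m1(2) h by linarith
      thus "m \<le> ((1+b) * u)^2" using L1 by (simp add: u_def power_mult_distrib)
    qed
    finally show ?thesis .
  qed
  have us: "u \<le> (1+2/b) * s"
  proof -
    have "u = sqrt la" by (simp add: u_def)
    also have "\<dots> \<le> (1+2/b) * s"
    proof (rule real_le_lsqrt)
      show "0 \<le> (1+2/b) * s" using b s0 by simp
      have be: "2/b \<le> (1+2/b)^2"
      proof -
        have x0: "0 \<le> 2/b" "0 \<le> (2/b) * (2/b)" using b by simp_all
        have "(1+2/b)^2 = 1 + 2 * (2/b) + (2/b) * (2/b)" by (simp add: power2_eq_square algebra_simps)
        thus ?thesis using x0 by linarith
      qed
      have "la \<le> (2/b) * m" using m1' b by (simp add: field_simps)
      also have "\<dots> \<le> (1+2/b)^2 * m" using be m1' by (intro mult_right_mono) auto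
      finally show "la \<le> ((1+2/b) * s)^2" using s2 by (simp add: power_mult_distrib)
    qed
    finally show ?thesis .
  qed
  have bb: "0 \<le> 1 + b" "0 \<le> 1 + 2/b" using b by simp_all
  note R = regime[of "cmod l1" al s "cmod (xi1 l1 l2 l3)" "cmod (xi2 l1 l2 l3)" "cmod (xi3 l1 l2 l3)"
     "cmod (l2 + l3)" "cmod (l1 + l3)" "cmod (l1 + l2)" u "1+b" "1+2/b"]
  have h: "0 \<le> cmod l1" "cmod l1 \<le> al" "0 \<le> cmod (l2 + l3)" "cmod (l2 + l3) \<le> al"
     "0 \<le> cmod (l1 + l3)" "0 \<le> cmod (l1 + l2)" using A rA P r0' p0' by auto
  note R' = R[OF h(1,2) s1 X1 X2 X3 h(3,4) h(5) P2 h(6) P3 u1 su us bb]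
  show ?thesis unfolding Bs_def K_def s_def[symmetric] u_def[symmetric] using R' by linarith
qed
theorem lemma4p5:
  fixes \<alpha> b c T :: real
    and lam :: "nat \<Rightarrow> real"
    and l1 l2 l3 :: "nat \<Rightarrow> complex"
    and D E F :: "nat \<Rightarrow> real \<Rightarrow> complex"
  assumes "b > 0" and "\<alpha> - c\<^sup>2 / b > 0" and "T > 0"
    and "lam 0 > 0" and "mono lam" and "filterlim lam at_top sequentially"
    and roots: "\<And>n z. z ^ 3 + of_real \<alpha> * z\<^sup>2 + of_real (b * lam n) * z + of_real (c\<^sup>2 * lam n)
                   = (z - l1 n) * (z - l2 n) * (z - l3 n)"
    and "\<And>n. l1 n \<in> \<real>" and "\<And>n. l2 n \<notin> \<real>" and "\<And>n. l3 n = cnj (l2 n)"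
    and "\<And>n. Re (l1 n) < 0" and "\<And>n. Re (l2 n) < 0" and "\<And>n. Re (l3 n) < 0"
    and "\<And>n. D n = Afun (l1 n) (l2 n) (l3 n)"
    and "\<And>n. E n = (\<lambda>t. - Bfun (l1 n) (l2 n) (l3 n) t)"
    and "\<And>n. F n = Cfun (l1 n) (l2 n) (l3 n)"
  shows "\<exists>C>0. \<forall>n. \<forall>t\<in>{0..T}.
     max (max (cmod (D n t)^2) (cmod (d1 (D n) t)^2))
         (max (cmod (d2 (D n) t / of_real (lam n powr (1/2)))^2)
              (cmod (d2 (D n) t / of_real (lam n powr (3/2)))^2)) \<le> C
   \<and> max (max (cmod (E n t)^2) (cmod (d1 (E n) t)^2))
         (max (cmod (d2 (E n) t / of_real (lam n powr (1/2)))^2)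
              (cmod (d2 (E n) t / of_real (lam n powr (3/2)))^2)) \<le> C
   \<and> max (max (cmod (of_real (lam n powr (1/2)) * F n t)^2)
              (cmod (of_real (lam n) * F n t)^2))
         (max (cmod (of_real (lam n powr (1/2)) * d1 (F n) t)^2)
              (max (cmod (d2 (F n) t)^2)
                   (cmod (d2 (F n) t / of_real (lam n powr (1/2)))^2))) \<le> C"
proof -
  note as = assms
  have al: "\<alpha> > 0" using as(1,2) by (smt (verit) divide_nonneg_pos zero_le_power2)
  have lpos: "lam n > 0" for n using as(4) monoD[OF as(5), of 0 n] by simp
  have V: "of_real \<alpha> = -(l1 n + l2 n + l3 n) \<and> of_real (b * lam n) = l1 n * l2 n + l1 n * l3 n + l2 n * l3 n" for n
  proof -
    have h0: "(0::complex) ^ 3 + of_real \<alpha> * 0\<^sup>2 + of_real (b * lam n) * 0 + of_real (c\<^sup>2 * lam n)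
                   = (0 - l1 n) * (0 - l2 n) * (0 - l3 n)" by (rule roots)
    have h1: "(1::complex) ^ 3 + of_real \<alpha> * 1\<^sup>2 + of_real (b * lam n) * 1 + of_real (c\<^sup>2 * lam n)
                   = (1 - l1 n) * (1 - l2 n) * (1 - l3 n)" by (rule roots)
    have h2: "(-1::complex) ^ 3 + of_real \<alpha> * (-1)\<^sup>2 + of_real (b * lam n) * (-1) + of_real (c\<^sup>2 * lam n)
                   = (-1 - l1 n) * (-1 - l2 n) * (-1 - l3 n)" by (rule roots)
    show ?thesis by (rule vieta[OF h0 h1 h2])
  qed
  define L where "L = max 1 ((1 + 2 * \<alpha>^2) / b)"
  have "\<forall>\<^sub>F n in sequentially. L \<le> lam n" using as(6) by (simp add: filterlim_at_top)
  then obtain N where N: "\<And>n. n \<ge> N \<Longrightarrow> L \<le> lam n" by (auto simp: eventually_sequentially)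
  define Bn where "Bn n = Bs (cmod (l1 n)) (cmod (l2 n)) (cmod (xi1 (l1 n) (l2 n) (l3 n))) (cmod (xi2 (l1 n) (l2 n) (l3 n))) (cmod (xi3 (l1 n) (l2 n) (l3 n)))
                   (cmod (l2 n + l3 n)) (cmod (l1 n + l3 n)) (cmod (l1 n + l2 n)) (sqrt (lam n))" for n
  have Bbig: "Bn n \<le> K \<alpha> b" if "n \<ge> N" for n
  proof -
    have L: "L \<le> lam n" using N that by blast
    have L1: "1 \<le> lam n" using L by (simp add: L_def)
    have "(1 + 2 * \<alpha>^2) / b \<le> lam n" using L by (simp add: L_def)
    hence L2: "1 + 2 * \<alpha>^2 \<le> b * lam n" using as(1) by (simp add: divide_le_eq mult.commute)
    have q0: "Im (l2 n) \<noteq> 0" using as(9)[of n] by (simp add: complex_is_Real_iff)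
    show ?thesis unfolding Bn_def
      by (rule big[OF as(1) al as(8) as(10) as(11) as(12) q0 conjunct1[OF V] conjunct2[OF V] L1 L2])
  qed
  define M where "M = max (K \<alpha> b) (Max (Bn ` {..<N}))"
  have BM: "Bn n \<le> M" for n
  proof (cases "n < N")
    case True thus ?thesis unfolding M_def by (simp add: le_max_iff_disj)
  next
    case False thus ?thesis using Bbig[of n] unfolding M_def by (simp add: le_max_iff_disj)
  qed
  define C where "C = M^2 + 1"
  have sq: "x^2 \<le> C" if "0 \<le> x" "x \<le> M" for x
  proof -
    have "x^2 \<le> M^2" using that by (intro power_mono)
    thus ?thesis by (simp add: C_def)
  qed
  have C0: "C > 0" unfolding C_def using zero_le_power2[of M] by linarith
  show ?thesis
  proof (intro exI[of _ C] conjI C0 allI ballI)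
    fix n t assume t: "t \<in> {0..T}"
    have t0: "0 \<le> t" using t by simp
    have re: "Re (l1 n) \<le> 0" "Re (l2 n) \<le> 0" "Re (l3 n) \<le> 0" using as(11,12,13)[of n] by simp_all
    have l3m: "cmod (l3 n) = cmod (l2 n)" by (simp add: as(10))
    note P = pw[OF lpos[of n] t0 re l3m as(14)[of n] as(15)[of n] as(16)[of n], folded Bn_def]
    have Q: "\<And>x. x \<le> Bn n \<Longrightarrow> 0 \<le> x \<Longrightarrow> x^2 \<le> C" using BM sq by (meson order_trans)
    show "max (max (cmod (D n t)^2) (cmod (d1 (D n) t)^2))
         (max (cmod (d2 (D n) t / of_real (lam n powr (1/2)))^2)
              (cmod (d2 (D n) t / of_real (lam n powr (3/2)))^2)) \<le> C"
      by (intro max.boundedI Q P norm_ge_zero)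
    show "max (max (cmod (E n t)^2) (cmod (d1 (E n) t)^2))
         (max (cmod (d2 (E n) t / of_real (lam n powr (1/2)))^2)
              (cmod (d2 (E n) t / of_real (lam n powr (3/2)))^2)) \<le> C"
      by (intro max.boundedI Q P norm_ge_zero)
    show "max (max (cmod (of_real (lam n powr (1/2)) * F n t)^2)
              (cmod (of_real (lam n) * F n t)^2))
         (max (cmod (of_real (lam n powr (1/2)) * d1 (F n) t)^2)
              (max (cmod (d2 (F n) t)^2)
                   (cmod (d2 (F n) t / of_real (lam n powr (1/2)))^2))) \<le> C"
      by (intro max.boundedI Q P norm_ge_zero)
  qed
qed

end
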